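(* Consider the Int-GARCH(1,1,1) model: for integers $t$, $\lambda_t=h_t\epsilon_t$, $\delta_t=h_t\eta_t$, $$h_t=\mu+\alpha_1|\lambda_{t-1}|+\beta_1\delta_{t-1}+\gamma_1h_{t-1},$$ where $\mu>0$, $\alpha_1,\beta_1,\gamma_1>0$ are constants, $\{\epsilon_t\}$ are i.i.d. $N(0,1)$, $\{\eta_t\}$ are i.i.d. $\Gamma(k,1)$ (shape $k>0$, scale 1), the two sequences are mutually independent, and $(\epsilon_t,\eta_t)$ is independent of $\{h_s:s\le t\}$. Put $x_t=\alpha_1|\epsilon_t|+\beta_1\eta_t+\gamma_1$, $C_1=E(x_t)$, $C_2=E(x_t^2)$, and assume the process starts from its infinite past with finite variance and $C_2<C_1<1$. Then (i) $E(\eta_tx_t)=\alpha_1\sqrt{2/\pi}\,k+\beta_1(k+k^2)+\gamma_1k$; (ii) for every integer $s\ge 1$, $$E(h_th_{t+s}\eta_t)=\frac{\mu^2k}{C_1-1}\left(-\frac{C_1^s-1}{C_1-1}+\frac{C_1^s+C_1^{s-1}}{C_2-1}\left[\alpha_1\sqrt{2/\pi}+\beta_1(1+k)+\gamma_1\right]\right).$$ *)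

theory Defs
  imports "HOL-Probability.Probability"
begin

definition gamma_density :: "real \<Rightarrow> real \<Rightarrow> real" where
  "gamma_density k x = (if x > 0 then x powr (k - 1) * exp (- x) / Gamma k else 0)"

end

theory Submission
  imports Defs "HOL-Analysis.Analysis"
begin


definition nz :: "(int \<Rightarrow> 'a \<Rightarrow> real) \<Rightarrow> (int \<Rightarrow> 'a \<Rightarrow> real) \<Rightarrow> int + int \<Rightarrow> 'a \<Rightarrow> real" where
  "nz eps eta i = (case i of Inl t \<Rightarrow> eps t | Inr t \<Rightarrow> eta t)"

definition tm :: "int + int \<Rightarrow> int" where
  "tm i = (case i of Inl t \<Rightarrow> t | Inr t \<Rightarrow> t)"

lemma t1:
  fixes a b m k A :: real
  assumes "a \<noteq> 1" "b \<noteq> 1"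
  shows "m\<^sup>2 * k / (a - 1) * (- (a ^ 1 - 1) / (a - 1) + (a ^ 1 + a ^ (1 - 1)) / (b - 1) * A)
     = m * (k * (- m / (a - 1))) + k * A * (m\<^sup>2 * (1 + a) / ((a - 1) * (b - 1)))"
proof -
  have x: "inverse (a - 1) * (a - 1) = 1" and y: "inverse (b - 1) * (b - 1) = 1" using assms by auto
  have z: "(1::nat) - 1 = 0" by simp
  show ?thesis unfolding divide_inverse inverse_mult_distrib power_one_right z power_0
    using x y by algebra
qed
lemma t2:
  fixes a b m k A :: real
  assumes "a \<noteq> 1" "b \<noteq> 1"
  shows "m\<^sup>2 * k / (a - 1) * (- (a ^ Suc (Suc n) - 1) / (a - 1) + (a ^ Suc (Suc n) + a ^ (Suc (Suc n) - 1)) / (b - 1) * A)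
     = m * (k * (- m / (a - 1))) + a * (m\<^sup>2 * k / (a - 1) * (- (a ^ Suc n - 1) / (a - 1) + (a ^ Suc n + a ^ (Suc n - 1)) / (b - 1) * A))"
proof -
  have x: "inverse (a - 1) * (a - 1) = 1" and y: "inverse (b - 1) * (b - 1) = 1" using assms by auto
  show ?thesis unfolding divide_inverse inverse_mult_distrib diff_Suc_1 power_Suc
    using x y by algebra
qed

locale igarch = prob_space M
  for M :: "'a measure" +
  fixes h eps eta :: "int \<Rightarrow> 'a \<Rightarrow> real"
    and \<mu> \<alpha>1 \<beta>1 \<gamma>1 k C1 C2 :: real
  assumes mu: "\<mu> > 0" and a1: "\<alpha>1 > 0" and b1: "\<beta>1 > 0" and g1: "\<gamma>1 > 0" and kpos: "k > 0"
    and meas_h: "\<And>t. h t \<in> borel_measurable M"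
    and rec: "\<And>t \<omega>. \<omega> \<in> space M \<Longrightarrow>
        h t \<omega> = \<mu> + \<alpha>1 * \<bar>h (t - 1) \<omega> * eps (t - 1) \<omega>\<bar>
                 + \<beta>1 * (h (t - 1) \<omega> * eta (t - 1) \<omega>) + \<gamma>1 * h (t - 1) \<omega>"
    and eps_distr: "\<And>t. distributed M lborel (eps t) std_normal_density"
    and eta_distr: "\<And>t. distributed M lborel (eta t) (gamma_density k)"
    and indep_noise: "indep_vars (\<lambda>_. borel)
        (\<lambda>i. case i of Inl t \<Rightarrow> eps t | Inr t \<Rightarrow> eta t) UNIV"
    and indep_past: "\<And>t. indep_set
        (sets (vimage_algebra (space M) (\<lambda>\<omega>. (eps t \<omega>, eta t \<omega>)) (borel \<Otimes>\<^sub>M borel)))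
        (sets (vimage_algebra (space M) (\<lambda>\<omega>. \<lambda>s\<in>{..t}. h s \<omega>) (PiM {..t} (\<lambda>_. borel))))"
    and finite_var: "\<And>t. integrable M (\<lambda>\<omega>. (h t \<omega>)\<^sup>2)"
    and bounded_var: "\<exists>B. \<forall>t. expectation (\<lambda>\<omega>. (h t \<omega>)\<^sup>2) \<le> B"
    and C1_def: "\<And>t. expectation
        (\<lambda>\<omega>. \<alpha>1 * \<bar>eps t \<omega>\<bar> + \<beta>1 * eta t \<omega> + \<gamma>1) = C1"
    and C2_def: "\<And>t. expectation
        (\<lambda>\<omega>. (\<alpha>1 * \<bar>eps t \<omega>\<bar> + \<beta>1 * eta t \<omega> + \<gamma>1)\<^sup>2) = C2"
    and C21: "C2 < C1" and C1l: "C1 < 1"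
begin

lemma meas_eps[measurable]: "eps t \<in> borel_measurable M"
  using distributed_measurable[OF eps_distr[of t]] by simp

lemma meas_eta[measurable]: "eta t \<in> borel_measurable M"
  using distributed_measurable[OF eta_distr[of t]] by simp

lemma meas_h'[measurable]: "h t \<in> borel_measurable M"
  by (rule meas_h)

lemma nz_meas[measurable]: "nz eps eta i \<in> borel_measurable M"
  by (cases i) (auto simp: nz_def)

lemma indep_nz: "indep_vars (\<lambda>_. borel) (nz eps eta) UNIV"
  using indep_noise unfolding nz_def[abs_def] by simp

lemma block_indep:
  assumes "A \<inter> B = {}"
  shows "indep_var (PiM A (\<lambda>_. borel)) (\<lambda>\<omega>. restrict (\<lambda>i. nz eps eta i \<omega>) A)
                   (PiM B (\<lambda>_. borel)) (\<lambda>\<omega>. restrict (\<lambda>i. nz eps eta i \<omega>) B)"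
  using indep_var_restrict[OF indep_nz assms] by simp

lemma block_prod:
  fixes F G :: "_ \<Rightarrow> real"
  assumes AB: "A \<inter> B = {}"
    and F[measurable]: "F \<in> borel_measurable (PiM A (\<lambda>_. borel))"
    and G[measurable]: "G \<in> borel_measurable (PiM B (\<lambda>_. borel))"
    and iF: "integrable M (\<lambda>\<omega>. F (restrict (\<lambda>i. nz eps eta i \<omega>) A))"
    and iG: "integrable M (\<lambda>\<omega>. G (restrict (\<lambda>i. nz eps eta i \<omega>) B))"
  shows "integrable M (\<lambda>\<omega>. F (restrict (\<lambda>i. nz eps eta i \<omega>) A) * G (restrict (\<lambda>i. nz eps eta i \<omega>) B))"
    and "expectation (\<lambda>\<omega>. F (restrict (\<lambda>i. nz eps eta i \<omega>) A) * G (restrict (\<lambda>i. nz eps eta i \<omega>) B))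
         = expectation (\<lambda>\<omega>. F (restrict (\<lambda>i. nz eps eta i \<omega>) A)) * expectation (\<lambda>\<omega>. G (restrict (\<lambda>i. nz eps eta i \<omega>) B))"
proof -
  have "indep_var borel (F \<circ> (\<lambda>\<omega>. restrict (\<lambda>i. nz eps eta i \<omega>) A)) borel (G \<circ> (\<lambda>\<omega>. restrict (\<lambda>i. nz eps eta i \<omega>) B))"
    by (rule indep_var_compose[OF block_indep[OF AB] F G])
  then have I: "indep_var borel (\<lambda>\<omega>. F (restrict (\<lambda>i. nz eps eta i \<omega>) A)) borel (\<lambda>\<omega>. G (restrict (\<lambda>i. nz eps eta i \<omega>) B))"
    by (simp add: comp_def)
  show "integrable M (\<lambda>\<omega>. F (restrict (\<lambda>i. nz eps eta i \<omega>) A) * G (restrict (\<lambda>i. nz eps eta i \<omega>) B))"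
    by (rule indep_var_integrable[OF I iF iG])
  show "expectation (\<lambda>\<omega>. F (restrict (\<lambda>i. nz eps eta i \<omega>) A) * G (restrict (\<lambda>i. nz eps eta i \<omega>) B))
         = expectation (\<lambda>\<omega>. F (restrict (\<lambda>i. nz eps eta i \<omega>) A)) * expectation (\<lambda>\<omega>. G (restrict (\<lambda>i. nz eps eta i \<omega>) B))"
    by (rule indep_var_lebesgue_integral[OF I iF iG])
qed

lemma past_indep:
  fixes F :: "real \<times> real \<Rightarrow> real" and \<phi> :: "real \<Rightarrow> real"
  assumes F[measurable]: "F \<in> borel_measurable (borel \<Otimes>\<^sub>M borel)"
    and \<phi>[measurable]: "\<phi> \<in> borel_measurable borel"
  shows "indep_var borel (\<lambda>\<omega>. F (eps t \<omega>, eta t \<omega>)) borel (\<lambda>\<omega>. \<phi> (h t \<omega>))"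
  unfolding indep_var_eq
proof
  show "random_variable borel (\<lambda>\<omega>. F (eps t \<omega>, eta t \<omega>)) \<and> random_variable borel (\<lambda>\<omega>. \<phi> (h t \<omega>))"
    by measurable
  let ?A = "sets (vimage_algebra (space M) (\<lambda>\<omega>. (eps t \<omega>, eta t \<omega>)) (borel \<Otimes>\<^sub>M borel))"
  let ?B = "sets (vimage_algebra (space M) (\<lambda>\<omega>. \<lambda>s\<in>{..t}. h s \<omega>) (PiM {..t} (\<lambda>_. borel)))"
  have 1: "sigma_sets (space M) {(\<lambda>\<omega>. F (eps t \<omega>, eta t \<omega>)) -` A \<inter> space M |A. A \<in> sets borel} \<subseteq> ?A"
    unfolding sets_vimage_algebra
  proof (rule sigma_sets_mono, safe)
    fix A :: "real set" assume A: "A \<in> sets borel"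
    have "(\<lambda>\<omega>. F (eps t \<omega>, eta t \<omega>)) -` A \<inter> space M = (\<lambda>\<omega>. (eps t \<omega>, eta t \<omega>)) -` (F -` A \<inter> space (borel \<Otimes>\<^sub>M borel)) \<inter> space M"
      by (auto simp: space_pair_measure)
    moreover have "F -` A \<inter> space (borel \<Otimes>\<^sub>M borel) \<in> sets (borel \<Otimes>\<^sub>M borel)"
      using A by measurable
    ultimately show "(\<lambda>\<omega>. F (eps t \<omega>, eta t \<omega>)) -` A \<inter> space M \<in> sigma_sets (space M) {(\<lambda>\<omega>. (eps t \<omega>, eta t \<omega>)) -` A \<inter> space M |A. A \<in> sets (borel \<Otimes>\<^sub>M borel)}"
      by (intro sigma_sets.Basic) blast
  qed
  have 2: "sigma_sets (space M) {(\<lambda>\<omega>. \<phi> (h t \<omega>)) -` A \<inter> space M |A. A \<in> sets borel} \<subseteq> ?B"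
    unfolding sets_vimage_algebra
  proof (rule sigma_sets_mono, safe)
    fix A :: "real set" assume A: "A \<in> sets borel"
    have "(\<lambda>\<omega>. \<phi> (h t \<omega>)) -` A \<inter> space M = (\<lambda>\<omega>. \<lambda>s\<in>{..t}. h s \<omega>) -` ((\<lambda>f. \<phi> (f t)) -` A \<inter> space (PiM {..t} (\<lambda>_. borel :: real measure))) \<inter> space M"
      by (auto simp: space_PiM)
    moreover have "(\<lambda>f. \<phi> (f t)) -` A \<inter> space (PiM {..t} (\<lambda>_. borel :: real measure)) \<in> sets (PiM {..t} (\<lambda>_. borel))"
      using A by measurable
    ultimately show "(\<lambda>\<omega>. \<phi> (h t \<omega>)) -` A \<inter> space M \<in> sigma_sets (space M) {(\<lambda>\<omega>. \<lambda>s\<in>{..t}. h s \<omega>) -` A \<inter> space M |A. A \<in> sets (Pi\<^sub>M {..t} (\<lambda>_. borel))}"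
      by (intro sigma_sets.Basic) blast
  qed
  show "indep_set (sigma_sets (space M) {(\<lambda>\<omega>. F (eps t \<omega>, eta t \<omega>)) -` A \<inter> space M |A. A \<in> sets borel})
     (sigma_sets (space M) {(\<lambda>\<omega>. \<phi> (h t \<omega>)) -` A \<inter> space M |A. A \<in> sets borel})"
    unfolding indep_set_def
    by (rule indep_sets_mono_sets[OF indep_past[of t, unfolded indep_set_def]]) (use 1 2 in \<open>auto split: bool.split\<close>)
qed

lemma past_prod:
  fixes F :: "real \<times> real \<Rightarrow> real" and \<phi> :: "real \<Rightarrow> real"
  assumes F[measurable]: "F \<in> borel_measurable (borel \<Otimes>\<^sub>M borel)"
    and \<phi>[measurable]: "\<phi> \<in> borel_measurable borel"
    and iF: "integrable M (\<lambda>\<omega>. F (eps t \<omega>, eta t \<omega>))"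
    and iG: "integrable M (\<lambda>\<omega>. \<phi> (h t \<omega>))"
  shows "integrable M (\<lambda>\<omega>. F (eps t \<omega>, eta t \<omega>) * \<phi> (h t \<omega>))"
    and "expectation (\<lambda>\<omega>. F (eps t \<omega>, eta t \<omega>) * \<phi> (h t \<omega>))
         = expectation (\<lambda>\<omega>. F (eps t \<omega>, eta t \<omega>)) * expectation (\<lambda>\<omega>. \<phi> (h t \<omega>))"
proof -
  have I: "indep_var borel (\<lambda>\<omega>. F (eps t \<omega>, eta t \<omega>)) borel (\<lambda>\<omega>. \<phi> (h t \<omega>))"
    by (rule past_indep[OF F \<phi>])
  show "integrable M (\<lambda>\<omega>. F (eps t \<omega>, eta t \<omega>) * \<phi> (h t \<omega>))"
    by (rule indep_var_integrable[OF I iF iG])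
  show "expectation (\<lambda>\<omega>. F (eps t \<omega>, eta t \<omega>) * \<phi> (h t \<omega>))
         = expectation (\<lambda>\<omega>. F (eps t \<omega>, eta t \<omega>)) * expectation (\<lambda>\<omega>. \<phi> (h t \<omega>))"
    by (rule indep_var_lebesgue_integral[OF I iF iG])
qed


definition "X t \<omega> = \<alpha>1 * \<bar>eps t \<omega>\<bar> + \<beta>1 * eta t \<omega> + \<gamma>1"

lemma meas_X[measurable]: "X t \<in> borel_measurable M"
  unfolding X_def by measurable

lemma gamma_density_nonneg: "0 \<le> gamma_density k x"
  using kpos by (simp add: gamma_density_def)

lemma gamma_moment_nn:
  "(\<integral>\<^sup>+x. ennreal (gamma_density k x * x ^ n) \<partial>lborel) = ennreal (Gamma (k + real n) / Gamma k)"
proof -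
  have k: "k > 0" by (rule kpos)
  have kn: "k + real n > 0" using k by simp
  have I: "(\<integral>\<^sup>+x. ennreal (indicator {0..} x * (x powr (k + real n - 1) / exp x)) \<partial>lborel) = Gamma (k + real n)"
    using nn_integral_has_integral_lebesgue[OF _ Gamma_integral_real[OF kn]] by simp
  have eq: "ennreal (gamma_density k x * x ^ n) = ennreal (indicator {0..} x * (x powr (k + real n - 1) / exp x)) * ennreal (1 / Gamma k)" for x
  proof (cases "x > 0")
    case True
    have "x powr (k - 1) * x ^ n = x powr (k + real n - 1)"
      using True by (simp add: powr_realpow[symmetric] powr_add[symmetric] algebra_simps)
    then have "gamma_density k x * x ^ n = indicator {0..} x * (x powr (k + real n - 1) / exp x) * (1 / Gamma k)"
      using True by (simp add: gamma_density_def exp_minus field_simps)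
    then show ?thesis using True k by (simp add: ennreal_mult[symmetric])
  next
    case False
    then show ?thesis by (cases "x = 0") (auto simp: gamma_density_def indicator_def)
  qed
  have "(\<integral>\<^sup>+x. ennreal (gamma_density k x * x ^ n) \<partial>lborel)
      = (\<integral>\<^sup>+x. ennreal (indicator {0..} x * (x powr (k + real n - 1) / exp x)) \<partial>lborel) * ennreal (1 / Gamma k)"
    unfolding eq by (rule nn_integral_multc) measurable
  also have "\<dots> = ennreal (Gamma (k + real n) / Gamma k)"
    using I k by (simp add: ennreal_mult[symmetric])
  finally show ?thesis .
qed

lemma gamma_moment:
  shows "integrable lborel (\<lambda>x. gamma_density k x * x ^ n)"
    and "(\<integral>x. gamma_density k x * x ^ n \<partial>lborel) = Gamma (k + real n) / Gamma k"
proof -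
  have k: "k > 0" by (rule kpos)
  have "0 \<le> Gamma (k + real n) / Gamma k" using k by (intro divide_nonneg_nonneg) (auto intro!: Gamma_real_nonneg)
  have m: "(\<lambda>x. gamma_density k x * x ^ n) \<in> borel_measurable lborel"
    unfolding gamma_density_def by measurable
  have ae: "AE x in lborel. 0 \<le> gamma_density k x * x ^ n"
    using k by (intro AE_I2) (auto simp: gamma_density_def)
  from nn_integral_eq_integrable[OF m ae \<open>0 \<le> _\<close>] gamma_moment_nn[of n]
  show "integrable lborel (\<lambda>x. gamma_density k x * x ^ n)"
    and "(\<integral>x. gamma_density k x * x ^ n \<partial>lborel) = Gamma (k + real n) / Gamma k" by auto
qed

lemma eta_pow: "integrable M (\<lambda>\<omega>. eta t \<omega> ^ n)" "expectation (\<lambda>\<omega>. eta t \<omega> ^ n) = Gamma (k + real n) / Gamma k"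
proof -
  have m: "(\<lambda>x::real. x ^ n) \<in> borel_measurable lborel" by measurable
  show "integrable M (\<lambda>\<omega>. eta t \<omega> ^ n)"
    using distributed_integrable[OF eta_distr[of t] m] gamma_moment(1)[of n] gamma_density_nonneg by simp
  show "expectation (\<lambda>\<omega>. eta t \<omega> ^ n) = Gamma (k + real n) / Gamma k"
    using distributed_integral[OF eta_distr[of t] m] gamma_moment(2)[of n] gamma_density_nonneg by simp
qed

lemma eta_mom: "integrable M (eta t)" "expectation (eta t) = k"
   "integrable M (\<lambda>\<omega>. (eta t \<omega>)\<^sup>2)" "expectation (\<lambda>\<omega>. (eta t \<omega>)\<^sup>2) = k + k\<^sup>2"
proof -
  have k: "k > 0" by (rule kpos)
  show "integrable M (eta t)" using eta_pow(1)[of t 1] by simp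
  have nk: "k \<notin> \<int>\<^sub>\<le>\<^sub>0" "k + 1 \<notin> \<int>\<^sub>\<le>\<^sub>0" using k by (auto elim!: nonpos_Ints_cases)
  have G1: "Gamma (k + 1) = k * Gamma k" using Gamma_plus1[OF nk(1)] .
  have G2: "Gamma (k + 2) = (k + 1) * (k * Gamma k)"
    using Gamma_plus1[OF nk(2)] G1 by (simp add: add.assoc)
  have Gp: "Gamma k > 0" using k by simp
  show "expectation (eta t) = k" using eta_pow(2)[of t 1] G1 Gp by (simp add: add.commute)
  show "integrable M (\<lambda>\<omega>. (eta t \<omega>)\<^sup>2)" using eta_pow(1)[of t 2] by simp
  have "expectation (\<lambda>\<omega>. (eta t \<omega>)\<^sup>2) = Gamma (k + 2) / Gamma k" using eta_pow(2)[of t 2] by simp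
  also have "\<dots> = (k + 1) * k" unfolding G2 using Gp by (simp add: field_simps)
  finally show "expectation (\<lambda>\<omega>. (eta t \<omega>)\<^sup>2) = k + k\<^sup>2" by (simp add: power2_eq_square algebra_simps)
qed

lemma eps_mom: "integrable M (\<lambda>\<omega>. \<bar>eps t \<omega>\<bar>)" "expectation (\<lambda>\<omega>. \<bar>eps t \<omega>\<bar>) = sqrt (2 / pi)"
   "integrable M (\<lambda>\<omega>. (eps t \<omega>)\<^sup>2)" "expectation (\<lambda>\<omega>. (eps t \<omega>)\<^sup>2) = 1"
proof -
  have m1: "(\<lambda>x::real. \<bar>x\<bar>) \<in> borel_measurable lborel" by measurable
  have m2: "(\<lambda>x::real. x\<^sup>2) \<in> borel_measurable lborel" by measurable
  have n: "\<And>x. 0 \<le> std_normal_density x" by (simp add: normal_density_nonneg)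
  have a: "has_bochner_integral lborel (\<lambda>x. std_normal_density x * \<bar>x\<bar>) (sqrt (2/pi))"
    using std_normal_moment_abs_odd[of 0] by simp
  have b: "has_bochner_integral lborel (\<lambda>x. std_normal_density x * x\<^sup>2) 1"
    using std_normal_moment_even[of 1] by simp
  show "integrable M (\<lambda>\<omega>. \<bar>eps t \<omega>\<bar>)"
    using distributed_integrable[OF eps_distr[of t] m1] a n by (simp add: has_bochner_integral_iff)
  show "expectation (\<lambda>\<omega>. \<bar>eps t \<omega>\<bar>) = sqrt (2 / pi)"
    using distributed_integral[OF eps_distr[of t] m1] a n by (simp add: has_bochner_integral_iff)
  show "integrable M (\<lambda>\<omega>. (eps t \<omega>)\<^sup>2)"
    using distributed_integrable[OF eps_distr[of t] m2] b n by (simp add: has_bochner_integral_iff)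
  show "expectation (\<lambda>\<omega>. (eps t \<omega>)\<^sup>2) = 1"
    using distributed_integral[OF eps_distr[of t] m2] b n by (simp add: has_bochner_integral_iff)
qed

lemma eta_nonneg: "AE \<omega> in M. 0 \<le> eta t \<omega>"
proof -
  have m: "indicator {..<0} \<in> borel_measurable (lborel :: real measure)" by measurable
  have "(\<integral>\<^sup>+x. ennreal (gamma_density k x) * indicator {..<0} x \<partial>lborel) = 0"
    by (rule nn_integral_zero') (auto simp: gamma_density_def indicator_def)
  then have "(\<integral>\<^sup>+\<omega>. indicator {..<0} (eta t \<omega>) \<partial>M) = 0"
    using distributed_nn_integral[OF eta_distr[of t] m] by simp
  then have "AE \<omega> in M. indicator {..<0::real} (eta t \<omega>) = (0::ennreal)"
    by (subst (asm) nn_integral_0_iff_AE) auto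
  then show ?thesis
    by eventually_elim (auto simp: indicator_def split: if_splits)
qed

lemma abs_eps_eta: "integrable M (\<lambda>\<omega>. \<bar>eps t \<omega>\<bar> * eta t \<omega>)"
  "expectation (\<lambda>\<omega>. \<bar>eps t \<omega>\<bar> * eta t \<omega>) = sqrt (2 / pi) * k"
proof -
  have AB: "{Inl t} \<inter> {Inr t} = {}" by auto
  have F: "(\<lambda>f. \<bar>f (Inl t)\<bar>) \<in> borel_measurable (PiM {Inl t} (\<lambda>_. borel :: real measure))" by measurable
  have G: "(\<lambda>f. f (Inr t)) \<in> borel_measurable (PiM {Inr t} (\<lambda>_. borel :: real measure))" by measurable
  note bp = block_prod[OF AB F G]
  show "integrable M (\<lambda>\<omega>. \<bar>eps t \<omega>\<bar> * eta t \<omega>)"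
    using bp(1) eps_mom(1)[of t] eta_mom(1)[of t] by (simp add: nz_def)
  show "expectation (\<lambda>\<omega>. \<bar>eps t \<omega>\<bar> * eta t \<omega>) = sqrt (2 / pi) * k"
    using bp(2) eps_mom(1,2)[of t] eta_mom(1,2)[of t] by (simp add: nz_def)
qed


lemma X_mom: "integrable M (X t)" "expectation (X t) = C1"
  "integrable M (\<lambda>\<omega>. (X t \<omega>)\<^sup>2)" "expectation (\<lambda>\<omega>. (X t \<omega>)\<^sup>2) = C2"
proof -
  note i = eps_mom(1,3)[of t] eta_mom(1,3)[of t] abs_eps_eta(1)[of t]
  show "integrable M (X t)" unfolding X_def by (intro Bochner_Integration.integrable_add Bochner_Integration.integrable_mult_right integrable_const) (use i in auto)
  show "expectation (X t) = C1" unfolding X_def using C1_def[of t] by simp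
  have eq: "(\<lambda>\<omega>. (X t \<omega>)\<^sup>2) = (\<lambda>\<omega>. \<alpha>1\<^sup>2 * (eps t \<omega>)\<^sup>2 + \<beta>1\<^sup>2 * (eta t \<omega>)\<^sup>2 + \<gamma>1\<^sup>2
      + 2 * \<alpha>1 * \<beta>1 * (\<bar>eps t \<omega>\<bar> * eta t \<omega>) + 2 * \<alpha>1 * \<gamma>1 * \<bar>eps t \<omega>\<bar> + 2 * \<beta>1 * \<gamma>1 * eta t \<omega>)"
    by (simp add: X_def power2_eq_square algebra_simps abs_mult_self_eq)
  show "integrable M (\<lambda>\<omega>. (X t \<omega>)\<^sup>2)" unfolding eq by (intro Bochner_Integration.integrable_add Bochner_Integration.integrable_mult_right integrable_const) (use i in auto)
  show "expectation (\<lambda>\<omega>. (X t \<omega>)\<^sup>2) = C2" unfolding X_def using C2_def[of t] by simp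
qed

lemma eta_X: "integrable M (\<lambda>\<omega>. eta t \<omega> * X t \<omega>)"
  "expectation (\<lambda>\<omega>. eta t \<omega> * X t \<omega>) = \<alpha>1 * sqrt (2 / pi) * k + \<beta>1 * (k + k\<^sup>2) + \<gamma>1 * k"
proof -
  note i = eps_mom(1,3)[of t] eta_mom(1,3)[of t] abs_eps_eta(1)[of t]
  have eq: "(\<lambda>\<omega>. eta t \<omega> * X t \<omega>) = (\<lambda>\<omega>. \<alpha>1 * (\<bar>eps t \<omega>\<bar> * eta t \<omega>) + \<beta>1 * (eta t \<omega>)\<^sup>2 + \<gamma>1 * eta t \<omega>)"
    by (auto simp: X_def power2_eq_square algebra_simps)
  show "integrable M (\<lambda>\<omega>. eta t \<omega> * X t \<omega>)" unfolding eq by (intro Bochner_Integration.integrable_add Bochner_Integration.integrable_mult_right integrable_const) (use i in auto)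
  show "expectation (\<lambda>\<omega>. eta t \<omega> * X t \<omega>) = \<alpha>1 * sqrt (2 / pi) * k + \<beta>1 * (k + k\<^sup>2) + \<gamma>1 * k"
    unfolding eq using i abs_eps_eta(2)[of t] eta_mom(2,4)[of t]
    by (simp add: Bochner_Integration.integral_add Bochner_Integration.integral_mult_right del: integral_mult_right_zero)
qed

lemma C2_nonneg: "0 \<le> C2"
proof -
  have "0 \<le> expectation (\<lambda>\<omega>. (\<alpha>1 * \<bar>eps 0 \<omega>\<bar> + \<beta>1 * eta 0 \<omega> + \<gamma>1)\<^sup>2)"
    by (rule Bochner_Integration.integral_nonneg) simp
  then show ?thesis using C2_def[of 0] by simp
qed

lemma C1_pos: "0 < C1"
  using C2_nonneg C21 by simp

lemma X_nonneg: "AE \<omega> in M. \<forall>t. 0 \<le> X t \<omega>"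
proof -
  have "AE \<omega> in M. \<forall>t. 0 \<le> eta t \<omega>"
    using eta_nonneg by (subst AE_all_countable) auto
  then show ?thesis
    by eventually_elim (use a1 b1 g1 in \<open>auto simp: X_def intro!: add_nonneg_nonneg\<close>)
qed

definition "xv f t = \<alpha>1 * \<bar>f (Inl t)\<bar> + \<beta>1 * f (Inr t) + \<gamma>1"
definition "Pf u n f = (\<Prod>i\<in>{1..n}. xv f (u - int i))"
definition "P u n \<omega> = Pf u n (\<lambda>i. nz eps eta i \<omega>)"

lemma X_xv: "X t \<omega> = xv (\<lambda>i. nz eps eta i \<omega>) t"
  by (simp add: X_def xv_def nz_def)

lemma P_0[simp]: "P u 0 \<omega> = 1"
  by (simp add: P_def Pf_def)

lemma P_Suc: "P u (Suc n) \<omega> = P u n \<omega> * X (u - int (Suc n)) \<omega>"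
  by (simp add: P_def Pf_def X_xv)

lemma meas_P[measurable]: "P u n \<in> borel_measurable M"
  by (induction n) (simp_all add: P_Suc)

lemma P_nonneg: "AE \<omega> in M. \<forall>u n. 0 \<le> P u n \<omega>"
  using X_nonneg
proof eventually_elim
  case (elim \<omega>)
  show ?case
  proof (intro allI)
    fix u n show "0 \<le> P u n \<omega>" by (induction n) (use elim in \<open>auto simp: P_Suc\<close>)
  qed
qed

lemma xv_restrict: "Inl t \<in> A \<Longrightarrow> Inr t \<in> A \<Longrightarrow> xv (restrict f A) t = xv f t"
  by (simp add: xv_def)

lemma xv_meas: "Inl t \<in> A \<Longrightarrow> Inr t \<in> A \<Longrightarrow> (\<lambda>f. xv f t) \<in> borel_measurable (PiM A (\<lambda>_. borel))"
  unfolding xv_def by measurable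

lemma Pf_restrict: "(\<And>i. 1 \<le> i \<Longrightarrow> i \<le> n \<Longrightarrow> Inl (u - int i) \<in> A \<and> Inr (u - int i) \<in> A) \<Longrightarrow>
    Pf u n (restrict f A) = Pf u n f"
  unfolding Pf_def by (intro prod.cong refl xv_restrict) auto

lemma Pf_meas: "(\<And>i. 1 \<le> i \<Longrightarrow> i \<le> n \<Longrightarrow> Inl (u - int i) \<in> A \<and> Inr (u - int i) \<in> A) \<Longrightarrow>
    Pf u n \<in> borel_measurable (PiM A (\<lambda>_. borel))"
  unfolding Pf_def by (intro borel_measurable_prod xv_meas) auto

lemma P2_mom: "integrable M (\<lambda>\<omega>. (P u n \<omega>)\<^sup>2) \<and> expectation (\<lambda>\<omega>. (P u n \<omega>)\<^sup>2) = C2 ^ n"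
proof (induction n)
  case 0
  then show ?case by (simp add: prob_space)
next
  case (Suc n)
  define A where "A = {i. u - int n \<le> tm i \<and> tm i \<le> u - 1}"
  define B where "B = {Inl (u - int (Suc n)), Inr (u - int (Suc n))}"
  have AB: "A \<inter> B = {}" by (auto simp: A_def B_def tm_def)
  have inA: "\<And>i. 1 \<le> i \<Longrightarrow> i \<le> n \<Longrightarrow> Inl (u - int i) \<in> A \<and> Inr (u - int i) \<in> A"
    by (auto simp: A_def tm_def)
  have F: "(\<lambda>f. (Pf u n f)\<^sup>2) \<in> borel_measurable (PiM A (\<lambda>_. borel))"
    using Pf_meas[OF inA] by measurable
  have G: "(\<lambda>f. (xv f (u - int (Suc n)))\<^sup>2) \<in> borel_measurable (PiM B (\<lambda>_. borel))"
    using xv_meas[of "u - int (Suc n)" B] unfolding B_def by measurable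
  have eF: "\<And>\<omega>. Pf u n (restrict (\<lambda>i. nz eps eta i \<omega>) A) = P u n \<omega>"
    using Pf_restrict[OF inA] by (simp add: P_def)
  have eG: "\<And>\<omega>. xv (restrict (\<lambda>i. nz eps eta i \<omega>) B) (u - int (Suc n)) = X (u - int (Suc n)) \<omega>"
    by (simp add: B_def xv_restrict X_xv)
  note bp = block_prod[OF AB F G, unfolded eF eG]
  have eq: "(\<lambda>\<omega>. (P u (Suc n) \<omega>)\<^sup>2) = (\<lambda>\<omega>. (P u n \<omega>)\<^sup>2 * (X (u - int (Suc n)) \<omega>)\<^sup>2)"
    by (simp add: P_Suc power_mult_distrib)
  show ?case unfolding eq using bp Suc.IH X_mom(3,4) by simp
qed


lemma amgm: fixes a b c :: real assumes "c > 0" shows "a * b \<le> (c * a\<^sup>2 + b\<^sup>2 / c) / 2"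
proof -
  have "0 \<le> (c * a - b)\<^sup>2" by simp
  then have "c * (2 * (a * b)) \<le> c * (c * a\<^sup>2) + b\<^sup>2"
    by (simp add: power2_eq_square algebra_simps)
  also have "\<dots> = c * (c * a\<^sup>2 + b\<^sup>2 / c)"
    using assms by (simp add: algebra_simps)
  finally have "2 * (a * b) \<le> c * a\<^sup>2 + b\<^sup>2 / c"
    using assms by (rule mult_left_le_imp_le) 
  then show ?thesis by simp
qed

lemma vanish: fixes D K r :: real assumes "0 \<le> r" "r < 1" "\<And>n. D \<le> K * r ^ n" shows "D \<le> 0"
proof -
  have "(\<lambda>n. K * r ^ n) \<longlonglongrightarrow> K * 0"
    by (intro tendsto_mult tendsto_const LIMSEQ_power_zero) (use assms in auto)
  then show ?thesis using assms(3) by (intro LIMSEQ_le_const[of "\<lambda>n. K * r ^ n"]) auto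
qed

definition "Bd = (SOME B. \<forall>t. expectation (\<lambda>\<omega>. (h t \<omega>)\<^sup>2) \<le> B)"

lemma Eh2_le: "expectation (\<lambda>\<omega>. (h t \<omega>)\<^sup>2) \<le> Bd"
  using someI_ex[OF bounded_var] unfolding Bd_def by blast

lemma Bd_nonneg: "0 \<le> Bd"
proof -
  have "0 \<le> expectation (\<lambda>\<omega>. (h 0 \<omega>)\<^sup>2)" by (rule Bochner_Integration.integral_nonneg) simp
  then show ?thesis using Eh2_le[of 0] by linarith
qed

lemma h_int: "integrable M (h t)"
  using square_integrable_imp_integrable[OF meas_h finite_var] .

lemma hP_bound: "integrable M (\<lambda>\<omega>. \<bar>h (u - int n) \<omega>\<bar> * P u n \<omega>) \<and>
   expectation (\<lambda>\<omega>. \<bar>h (u - int n) \<omega>\<bar> * P u n \<omega>) \<le> sqrt C1 ^ n * (Bd + 1) / 2"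
proof -
  define c where "c = sqrt C1 ^ n"
  have c: "c > 0" unfolding c_def using C1_pos by simp
  have c2: "c\<^sup>2 = C1 ^ n" unfolding c_def using C1_pos by (simp add: power_mult_distrib[symmetric] power2_eq_square power_mult[symmetric] mult.commute)
  define g where "g \<omega> = (c * (h (u - int n) \<omega>)\<^sup>2 + (P u n \<omega>)\<^sup>2 / c) / 2" for \<omega>
  have ig: "integrable M g" unfolding g_def
    using finite_var[of "u - int n"] P2_mom[of u n] by auto
  have bnd: "\<bar>\<bar>h (u - int n) \<omega>\<bar> * P u n \<omega>\<bar> \<le> g \<omega>" for \<omega>
    using amgm[OF c, of "\<bar>h (u - int n) \<omega>\<bar>" "\<bar>P u n \<omega>\<bar>"] by (simp add: g_def abs_mult)
  have i: "integrable M (\<lambda>\<omega>. \<bar>h (u - int n) \<omega>\<bar> * P u n \<omega>)"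
    by (rule Bochner_Integration.integrable_bound[OF ig]) (use bnd in \<open>auto intro!: AE_I2 order_trans[OF _ abs_ge_self]\<close>)
  have "expectation (\<lambda>\<omega>. \<bar>h (u - int n) \<omega>\<bar> * P u n \<omega>) \<le> expectation g"
    by (rule Bochner_Integration.integral_mono[OF i ig]) (use bnd in \<open>auto intro: order_trans[OF abs_ge_self]\<close>)
  also have "expectation g = (c * expectation (\<lambda>\<omega>. (h (u - int n) \<omega>)\<^sup>2) + C2 ^ n / c) / 2"
    unfolding g_def using finite_var[of "u - int n"] P2_mom[of u n] by simp
  also have "\<dots> \<le> (c * Bd + c) / 2"
  proof -
    have "c * expectation (\<lambda>\<omega>. (h (u - int n) \<omega>)\<^sup>2) \<le> c * Bd"
      using Eh2_le c by (intro mult_left_mono) auto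
    moreover have "C2 ^ n \<le> C1 ^ n"
      using C2_nonneg C21 by (intro power_mono) auto
    then have "C2 ^ n / c \<le> c" using c c2 by (simp add: field_simps power2_eq_square)
    ultimately show ?thesis by (intro divide_right_mono add_mono) auto
  qed
  finally show ?thesis using i by (simp add: c_def algebra_simps)
qed

definition "y u \<omega> = max (- h u \<omega>) 0"

lemma y_step: assumes "\<omega> \<in> space M" "0 \<le> eta (u - 1) \<omega>"
  shows "y u \<omega> \<le> y (u - 1) \<omega> * X (u - 1) \<omega>"
proof (cases "h (u - 1) \<omega> \<ge> 0")
  case True
  have "0 \<le> \<alpha>1 * \<bar>h (u - 1) \<omega> * eps (u - 1) \<omega>\<bar>" using a1 by simp
  moreover have "0 \<le> \<beta>1 * (h (u - 1) \<omega> * eta (u - 1) \<omega>)" using b1 True assms(2) by simp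
  moreover have "0 \<le> \<gamma>1 * h (u - 1) \<omega>" using g1 True by simp
  ultimately have "h u \<omega> \<ge> 0" using rec[OF assms(1), of u] mu by linarith
  then show ?thesis using True by (simp add: y_def)
next
  case False
  let ?h = "h (u - 1) \<omega>"
  have yy: "y (u - 1) \<omega> = - ?h" using False by (simp add: y_def)
  have "- h u \<omega> \<le> - ?h * X (u - 1) \<omega>"
  proof -
    have "- h u \<omega> = - \<mu> - \<alpha>1 * \<bar>?h * eps (u - 1) \<omega>\<bar> - \<beta>1 * (?h * eta (u - 1) \<omega>) - \<gamma>1 * ?h"
      using rec[OF assms(1), of u] by simp
    also have "\<dots> \<le> \<alpha>1 * \<bar>?h * eps (u - 1) \<omega>\<bar> - \<beta>1 * (?h * eta (u - 1) \<omega>) - \<gamma>1 * ?h"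
    proof -
      have "0 \<le> \<alpha>1 * \<bar>?h * eps (u - 1) \<omega>\<bar>" using a1 by simp
      then show ?thesis using mu by linarith
    qed
    also have "\<dots> = - ?h * X (u - 1) \<omega>"
      using False by (simp add: X_def abs_mult algebra_simps)
    finally show ?thesis .
  qed
  moreover have "0 \<le> - ?h * X (u - 1) \<omega>"
    using False assms(2) a1 b1 g1 by (simp add: X_def mult_nonpos_nonneg)
  ultimately show ?thesis unfolding yy by (simp add: y_def)
qed

lemma y_nonneg: "0 \<le> y u \<omega>" by (simp add: y_def)
lemma y_le: "y u \<omega> \<le> \<bar>h u \<omega>\<bar>" by (simp add: y_def)
lemma meas_y[measurable]: "y u \<in> borel_measurable M" unfolding y_def by measurable

lemma y_iter: "AE \<omega> in M. \<forall>u n. y u \<omega> \<le> \<bar>h (u - int n) \<omega>\<bar> * P u n \<omega>"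
proof -
  have "AE \<omega> in M. \<forall>t. 0 \<le> eta t \<omega>"
    using eta_nonneg by (subst AE_all_countable) auto
  with X_nonneg P_nonneg AE_space show ?thesis
  proof eventually_elim
    case (elim \<omega>)
    show ?case
    proof (intro allI)
      fix u n
      have "y u \<omega> \<le> y (u - int n) \<omega> * P u n \<omega>"
      proof (induction n)
        case 0 then show ?case by simp
      next
        case (Suc n)
        have "y (u - int n) \<omega> \<le> y (u - int n - 1) \<omega> * X (u - int n - 1) \<omega>"
          by (rule y_step) (use elim in auto)
        then have "y (u - int n) \<omega> * P u n \<omega> \<le> y (u - int n - 1) \<omega> * X (u - int n - 1) \<omega> * P u n \<omega>"
          using elim by (intro mult_right_mono) auto
        also have "\<dots> = y (u - int (Suc n)) \<omega> * P u (Suc n) \<omega>"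
          by (simp add: P_Suc algebra_simps)
        finally show ?case using Suc.IH by linarith
      qed
      also have "\<dots> \<le> \<bar>h (u - int n) \<omega>\<bar> * P u n \<omega>"
        using elim y_le by (intro mult_right_mono) auto
      finally show "y u \<omega> \<le> \<bar>h (u - int n) \<omega>\<bar> * P u n \<omega>" .
    qed
  qed
qed

lemma h_nonneg_AE: "AE \<omega> in M. 0 \<le> h u \<omega>"
proof -
  have iy: "integrable M (y u)"
    by (rule Bochner_Integration.integrable_bound[OF h_int[of u]]) (auto simp: y_def)
  have "expectation (y u) \<le> (Bd + 1) / 2 * sqrt C1 ^ n" for n
  proof -
    have "expectation (y u) \<le> expectation (\<lambda>\<omega>. \<bar>h (u - int n) \<omega>\<bar> * P u n \<omega>)"
      by (rule integral_mono_AE[OF iy conjunct1[OF hP_bound]]) (use y_iter in auto)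
    then show ?thesis using hP_bound[of u n] by (simp add: algebra_simps)
  qed
  then have "expectation (y u) \<le> 0"
    by (intro vanish[where r="sqrt C1" and K="(Bd + 1) / 2"]) (use C1_pos C1l in auto)
  moreover have "0 \<le> expectation (y u)" by (rule Bochner_Integration.integral_nonneg) (simp add: y_nonneg)
  ultimately have "expectation (y u) = 0" by simp
  then have "AE \<omega> in M. y u \<omega> = 0"
    using integral_nonneg_eq_0_iff_AE[OF iy] y_nonneg by simp
  then show ?thesis by eventually_elim (simp add: y_def)
qed

lemma h_nonneg: "AE \<omega> in M. \<forall>u. 0 \<le> h u \<omega>"
  using h_nonneg_AE by (subst AE_all_countable) auto

lemma rec2: "AE \<omega> in M. \<forall>u. h u \<omega> = \<mu> + h (u - 1) \<omega> * X (u - 1) \<omega>"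
  using h_nonneg AE_space
proof eventually_elim
  case (elim \<omega>)
  show ?case
  proof
    fix u
    show "h u \<omega> = \<mu> + h (u - 1) \<omega> * X (u - 1) \<omega>"
      using rec[OF elim(2), of u] elim(1)[rule_format, of "u - 1"]
      by (simp add: X_def abs_mult algebra_simps)
  qed
qed


lemma rec2u: "AE \<omega> in M. h u \<omega> = \<mu> + h (u - 1) \<omega> * X (u - 1) \<omega>"
  using rec2 by eventually_elim blast

definition "xf a b = \<alpha>1 * \<bar>a\<bar> + \<beta>1 * b + \<gamma>1"

lemma X_xf: "X t \<omega> = xf (eps t \<omega>) (eta t \<omega>)"
  by (simp add: X_def xf_def)

lemma fp_lemma:
  fixes a :: "int \<Rightarrow> real"
  assumes rec: "\<And>u. a u = c + q * a (u - 1)" and q: "0 \<le> q" "q < 1" and K: "\<And>u. \<bar>a u\<bar> \<le> K"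
  shows "a u = c / (1 - q)"
proof -
  define L where "L = c / (1 - q)"
  have L: "c = L - q * L"
  proof -
    have "L - q * L = (1 - q) * L" by (simp add: algebra_simps)
    also have "\<dots> = c" using q by (simp add: L_def)
    finally show ?thesis by simp
  qed
  have st: "a u - L = q * (a (u - 1) - L)" for u using rec[of u] L by (simp add: algebra_simps)
  have it: "\<bar>a u - L\<bar> = q ^ n * \<bar>a (u - int n) - L\<bar>" for n
  proof (induction n)
    case 0 then show ?case by simp
  next
    case (Suc n)
    have e: "a (u - int n) - L = q * (a (u - int (Suc n)) - L)"
      using st[of "u - int n"] by (simp add: algebra_simps)
    have "\<bar>a (u - int n) - L\<bar> = q * \<bar>a (u - int (Suc n)) - L\<bar>"
      unfolding e using q by (simp add: abs_mult)
    then show ?case using Suc.IH by (simp add: algebra_simps)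
  qed
  have "\<bar>a u - L\<bar> \<le> (K + \<bar>L\<bar>) * q ^ n" for n
  proof -
    have "\<bar>a (u - int n) - L\<bar> \<le> K + \<bar>L\<bar>" using K[of "u - int n"] by linarith
    then have "q ^ n * \<bar>a (u - int n) - L\<bar> \<le> q ^ n * (K + \<bar>L\<bar>)"
      using q by (intro mult_left_mono) auto
    then show ?thesis using it[of n] by (simp add: algebra_simps)
  qed
  then have "\<bar>a u - L\<bar> \<le> 0" by (intro vanish[where r=q and K="K + \<bar>L\<bar>"]) (use q in auto)
  then show ?thesis unfolding L_def by simp
qed

lemma Eh_rec: "expectation (h u) = \<mu> + C1 * expectation (h (u - 1))"
proof -
  have F: "(\<lambda>p. xf (fst p) (snd p)) \<in> borel_measurable (borel \<Otimes>\<^sub>M borel)" unfolding xf_def by measurable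
  have id: "(\<lambda>x::real. x) \<in> borel_measurable borel" by simp
  note pp = past_prod[OF F id, of "u - 1", simplified, folded X_xf]
  have i1: "integrable M (\<lambda>\<omega>. X (u - 1) \<omega> * h (u - 1) \<omega>)"
    using pp(1) X_mom(1) h_int by auto
  have e1: "expectation (\<lambda>\<omega>. X (u - 1) \<omega> * h (u - 1) \<omega>) = C1 * expectation (h (u - 1))"
    using pp(2) X_mom(1,2) h_int by simp
  have "expectation (h u) = expectation (\<lambda>\<omega>. \<mu> + X (u - 1) \<omega> * h (u - 1) \<omega>)"
    by (rule integral_cong_AE) (use rec2 in \<open>auto simp: mult.commute\<close>)
  also have "\<dots> = \<mu> + C1 * expectation (h (u - 1))"
    using i1 e1 by (simp add: Bochner_Integration.integral_add prob_space)
  finally show ?thesis .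
qed

definition "mh = \<mu> / (1 - C1)"

lemma Eh: "expectation (h u) = mh"
proof -
  have "\<bar>expectation (h u)\<bar> \<le> Bd + 1" for u
  proof -
    have "\<bar>expectation (h u)\<bar> \<le> expectation (\<lambda>\<omega>. \<bar>h u \<omega>\<bar>)"
      by (rule integral_abs_bound)
    also have "\<dots> \<le> expectation (\<lambda>\<omega>. (h u \<omega>)\<^sup>2 + 1)"
    proof (rule Bochner_Integration.integral_mono)
      show "integrable M (\<lambda>\<omega>. \<bar>h u \<omega>\<bar>)" using h_int by auto
      show "integrable M (\<lambda>\<omega>. (h u \<omega>)\<^sup>2 + 1)" using finite_var by auto
      fix \<omega> show "\<bar>h u \<omega>\<bar> \<le> (h u \<omega>)\<^sup>2 + 1"
      proof (cases "\<bar>h u \<omega>\<bar> \<le> 1")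
        case False
        then have "\<bar>h u \<omega>\<bar> \<le> \<bar>h u \<omega>\<bar> * \<bar>h u \<omega>\<bar>" by (intro mult_le_cancel_left1[THEN iffD2]) auto
        then show ?thesis by (simp add: power2_eq_square abs_mult_self_eq)
      qed (use zero_le_power2[of "h u \<omega>"] in linarith)
    qed
    also have "\<dots> = expectation (\<lambda>\<omega>. (h u \<omega>)\<^sup>2) + 1"
      using finite_var by (simp add: Bochner_Integration.integral_add prob_space)
    finally show ?thesis using Eh2_le[of u] by linarith
  qed
  then show ?thesis unfolding mh_def
    by (intro fp_lemma[where q=C1 and K="Bd + 1"] Eh_rec) (use C1_pos C1l in auto)
qed


lemma past_gen:
  fixes F :: "real \<Rightarrow> real \<Rightarrow> real" and \<phi> :: "real \<Rightarrow> real"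
  assumes F: "(\<lambda>p. F (fst p) (snd p)) \<in> borel_measurable (borel \<Otimes>\<^sub>M borel)"
    and \<phi>: "\<phi> \<in> borel_measurable borel"
    and iF: "integrable M (\<lambda>\<omega>. F (eps t \<omega>) (eta t \<omega>))"
    and iG: "integrable M (\<lambda>\<omega>. \<phi> (h t \<omega>))"
  shows "integrable M (\<lambda>\<omega>. F (eps t \<omega>) (eta t \<omega>) * \<phi> (h t \<omega>))"
    and "expectation (\<lambda>\<omega>. F (eps t \<omega>) (eta t \<omega>) * \<phi> (h t \<omega>))
         = expectation (\<lambda>\<omega>. F (eps t \<omega>) (eta t \<omega>)) * expectation (\<lambda>\<omega>. \<phi> (h t \<omega>))"
  using past_prod[OF F \<phi>, of t] iF iG by simp_all

lemma hX: "integrable M (\<lambda>\<omega>. X t \<omega> * h t \<omega>)" "expectation (\<lambda>\<omega>. X t \<omega> * h t \<omega>) = C1 * mh"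
proof -
  have F: "(\<lambda>p. xf (fst p) (snd p)) \<in> borel_measurable (borel \<Otimes>\<^sub>M borel)" unfolding xf_def by measurable
  note pp = past_gen[OF F, of "\<lambda>x. x" t, folded X_xf]
  show "integrable M (\<lambda>\<omega>. X t \<omega> * h t \<omega>)" using pp(1) X_mom(1) h_int by simp
  show "expectation (\<lambda>\<omega>. X t \<omega> * h t \<omega>) = C1 * mh" using pp(2) X_mom(1,2) h_int Eh by simp
qed

lemma h2X2: "integrable M (\<lambda>\<omega>. (X t \<omega>)\<^sup>2 * (h t \<omega>)\<^sup>2)"
   "expectation (\<lambda>\<omega>. (X t \<omega>)\<^sup>2 * (h t \<omega>)\<^sup>2) = C2 * expectation (\<lambda>\<omega>. (h t \<omega>)\<^sup>2)"
proof -
  have F: "(\<lambda>p. (xf (fst p) (snd p))\<^sup>2) \<in> borel_measurable (borel \<Otimes>\<^sub>M borel)" unfolding xf_def by measurable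
  have \<phi>: "(\<lambda>x::real. x\<^sup>2) \<in> borel_measurable borel" by measurable
  note pp = past_gen[OF F \<phi>, of t, folded X_xf]
  show "integrable M (\<lambda>\<omega>. (X t \<omega>)\<^sup>2 * (h t \<omega>)\<^sup>2)" using pp(1) X_mom(3) finite_var by simp
  show "expectation (\<lambda>\<omega>. (X t \<omega>)\<^sup>2 * (h t \<omega>)\<^sup>2) = C2 * expectation (\<lambda>\<omega>. (h t \<omega>)\<^sup>2)"
    using pp(2) X_mom(3,4) finite_var by simp
qed

lemma Eh2_rec: "expectation (\<lambda>\<omega>. (h u \<omega>)\<^sup>2) = (\<mu>\<^sup>2 + 2 * \<mu> * C1 * mh) + C2 * expectation (\<lambda>\<omega>. (h (u - 1) \<omega>)\<^sup>2)"
proof -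
  have ae: "AE \<omega> in M. (h u \<omega>)\<^sup>2 = \<mu>\<^sup>2 + (2 * \<mu>) * (X (u - 1) \<omega> * h (u - 1) \<omega>) + (X (u - 1) \<omega>)\<^sup>2 * (h (u - 1) \<omega>)\<^sup>2"
    using rec2u[of u] by eventually_elim (simp add: power2_eq_square algebra_simps)
  have "expectation (\<lambda>\<omega>. (h u \<omega>)\<^sup>2) = expectation (\<lambda>\<omega>. \<mu>\<^sup>2 + (2 * \<mu>) * (X (u - 1) \<omega> * h (u - 1) \<omega>) + (X (u - 1) \<omega>)\<^sup>2 * (h (u - 1) \<omega>)\<^sup>2)"
    by (rule integral_cong_AE[OF _ _ ae]) measurable
  also have "\<dots> = \<mu>\<^sup>2 + (2 * \<mu>) * (C1 * mh) + C2 * expectation (\<lambda>\<omega>. (h (u - 1) \<omega>)\<^sup>2)"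
    using hX[of "u - 1"] h2X2[of "u - 1"]
    by (simp add: Bochner_Integration.integral_add Bochner_Integration.integral_mult_right prob_space del: integral_mult_right_zero)
  finally show ?thesis by (simp add: algebra_simps)
qed

definition "Qh = (\<mu>\<^sup>2 + 2 * \<mu> * C1 * mh) / (1 - C2)"

lemma Eh2: "expectation (\<lambda>\<omega>. (h u \<omega>)\<^sup>2) = Qh"
proof -
  have "\<bar>expectation (\<lambda>\<omega>. (h u \<omega>)\<^sup>2)\<bar> \<le> Bd" for u
  proof -
    have "0 \<le> expectation (\<lambda>\<omega>. (h u \<omega>)\<^sup>2)" by (rule Bochner_Integration.integral_nonneg) simp
    then show ?thesis using Eh2_le[of u] by simp
  qed
  then show ?thesis unfolding Qh_def
    by (intro fp_lemma[where q=C2 and K="Bd"] Eh2_rec) (use C2_nonneg C21 C1l in auto)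
qed


lemma h_partial: "AE \<omega> in M. \<forall>u n. h u \<omega> = \<mu> * (\<Sum>j<n. P u j \<omega>) + h (u - int n) \<omega> * P u n \<omega>"
  using rec2
proof eventually_elim
  case (elim \<omega>)
  show ?case
  proof (intro allI)
    fix u n show "h u \<omega> = \<mu> * (\<Sum>j<n. P u j \<omega>) + h (u - int n) \<omega> * P u n \<omega>"
    proof (induction n)
      case 0 then show ?case by simp
    next
      case (Suc n)
      have e: "h (u - int n) \<omega> = \<mu> + h (u - int (Suc n)) \<omega> * X (u - int (Suc n)) \<omega>"
        using elim[rule_format, of "u - int n"] by (simp add: algebra_simps)
      show ?case unfolding Suc.IH e by (simp add: P_Suc algebra_simps)
    qed
  qed
qed

lemma h_repr: "AE \<omega> in M. h u \<omega> = \<mu> * suminf (\<lambda>j. P u j \<omega>)"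
proof -
  define g where "g \<omega> = \<mu> * suminf (\<lambda>j. P u j \<omega>)" for \<omega>
  have mg[measurable]: "g \<in> borel_measurable M" unfolding g_def by measurable
  have key: "AE \<omega> in M. 0 \<le> g \<omega> \<and> g \<omega> \<le> h u \<omega> \<and> (\<forall>n. h u \<omega> - g \<omega> \<le> \<bar>h (u - int n) \<omega>\<bar> * P u n \<omega>)"
    using h_partial P_nonneg h_nonneg
  proof eventually_elim
    case (elim \<omega>)
    have Pn: "\<And>j. 0 \<le> P u j \<omega>" using elim(2) by auto
    have bnd: "(\<Sum>j<n. P u j \<omega>) \<le> h u \<omega> / \<mu>" for n
    proof -
      have "0 \<le> h (u - int n) \<omega> * P u n \<omega>" using elim(2,3) by auto
      then have "\<mu> * (\<Sum>j<n. P u j \<omega>) \<le> h u \<omega>" using elim(1)[rule_format, of u n] by linarith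
      then show ?thesis using mu by (simp add: field_simps mult.commute)
    qed
    have sm: "summable (\<lambda>j. P u j \<omega>)" by (rule summableI_nonneg_bounded[OF Pn bnd])
    have "suminf (\<lambda>j. P u j \<omega>) \<le> h u \<omega> / \<mu>" by (rule suminf_le_const[OF sm bnd])
    then have g1: "g \<omega> \<le> h u \<omega>" using mu unfolding g_def by (simp add: field_simps mult.commute)
    have g0: "0 \<le> g \<omega>" unfolding g_def using mu suminf_nonneg[OF sm Pn] by simp
    have "h u \<omega> - g \<omega> \<le> \<bar>h (u - int n) \<omega>\<bar> * P u n \<omega>" for n
    proof -
      have "(\<Sum>j<n. P u j \<omega>) \<le> suminf (\<lambda>j. P u j \<omega>)" by (rule sum_le_suminf[OF sm]) (auto simp: Pn)
      then have "\<mu> * (\<Sum>j<n. P u j \<omega>) \<le> g \<omega>" unfolding g_def using mu by simp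
      moreover have "h (u - int n) \<omega> * P u n \<omega> \<le> \<bar>h (u - int n) \<omega>\<bar> * P u n \<omega>"
        using Pn by (intro mult_right_mono) auto
      ultimately show ?thesis using elim(1)[rule_format, of u n] by linarith
    qed
    then show ?case using g0 g1 by auto
  qed
  have ig: "integrable M g"
    by (rule Bochner_Integration.integrable_bound[OF h_int[of u] mg]) (use key in \<open>eventually_elim, simp\<close>)
  have id: "integrable M (\<lambda>\<omega>. h u \<omega> - g \<omega>)" using ig h_int by auto
  have "expectation (\<lambda>\<omega>. h u \<omega> - g \<omega>) \<le> (Bd + 1) / 2 * sqrt C1 ^ n" for n
  proof -
    have "expectation (\<lambda>\<omega>. h u \<omega> - g \<omega>) \<le> expectation (\<lambda>\<omega>. \<bar>h (u - int n) \<omega>\<bar> * P u n \<omega>)"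
      by (rule integral_mono_AE[OF id conjunct1[OF hP_bound]]) (use key in auto)
    then show ?thesis using hP_bound[of u n] by (simp add: algebra_simps)
  qed
  then have "expectation (\<lambda>\<omega>. h u \<omega> - g \<omega>) \<le> 0"
    by (intro vanish[where r="sqrt C1" and K="(Bd + 1) / 2"]) (use C1_pos C1l in auto)
  moreover have "0 \<le> expectation (\<lambda>\<omega>. h u \<omega> - g \<omega>)"
    by (rule integral_nonneg_AE) (use key in auto)
  ultimately have "expectation (\<lambda>\<omega>. h u \<omega> - g \<omega>) = 0" by simp
  then have "AE \<omega> in M. h u \<omega> - g \<omega> = 0"
    using integral_nonneg_eq_0_iff_AE[OF id] key by (auto elim: AE_mp)
  then show ?thesis by eventually_elim (simp add: g_def)
qed

definition "Gf u f = \<mu> * suminf (\<lambda>j. Pf u j f)"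

lemma Gf_meas: "(\<And>i. 1 \<le> i \<Longrightarrow> Inl (u - int i) \<in> A \<and> Inr (u - int i) \<in> A) \<Longrightarrow>
    Gf u \<in> borel_measurable (PiM A (\<lambda>_. borel))"
proof -
  assume a: "\<And>i. 1 \<le> i \<Longrightarrow> Inl (u - int i) \<in> A \<and> Inr (u - int i) \<in> A"
  have "\<And>j. Pf u j \<in> borel_measurable (PiM A (\<lambda>_. borel))" by (rule Pf_meas) (use a in auto)
  then show ?thesis unfolding Gf_def[abs_def] by measurable
qed

lemma h_Gf: "(\<And>i. 1 \<le> i \<Longrightarrow> Inl (u - int i) \<in> A \<and> Inr (u - int i) \<in> A) \<Longrightarrow>
    AE \<omega> in M. h u \<omega> = Gf u (restrict (\<lambda>i. nz eps eta i \<omega>) A)"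
proof -
  assume a: "\<And>i. 1 \<le> i \<Longrightarrow> Inl (u - int i) \<in> A \<and> Inr (u - int i) \<in> A"
  have "P u j \<omega> = Pf u j (restrict (\<lambda>i. nz eps eta i \<omega>) A)" for j \<omega>
    unfolding P_def by (rule Pf_restrict[symmetric]) (use a in auto)
  then show ?thesis using h_repr[of u] by (simp add: Gf_def)
qed


lemma h_eta: "integrable M (\<lambda>\<omega>. eta t \<omega> * h t \<omega>)" "expectation (\<lambda>\<omega>. eta t \<omega> * h t \<omega>) = k * mh"
proof -
  have F: "(\<lambda>p. (\<lambda>(a::real) (b::real). b) (fst p) (snd p)) \<in> borel_measurable (borel \<Otimes>\<^sub>M borel)" by measurable
  note pp = past_gen[OF F, of "\<lambda>x. x" t]
  show "integrable M (\<lambda>\<omega>. eta t \<omega> * h t \<omega>)" using pp(1) eta_mom(1) h_int by simp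
  show "expectation (\<lambda>\<omega>. eta t \<omega> * h t \<omega>) = k * mh" using pp(2) eta_mom(1,2) h_int Eh by simp
qed

lemma h2_eta2: "integrable M (\<lambda>\<omega>. (eta t \<omega>)\<^sup>2 * (h t \<omega>)\<^sup>2)"
proof -
  have F: "(\<lambda>p. (\<lambda>(a::real) (b::real). b\<^sup>2) (fst p) (snd p)) \<in> borel_measurable (borel \<Otimes>\<^sub>M borel)"
    by measurable
  have \<phi>: "(\<lambda>x::real. x\<^sup>2) \<in> borel_measurable borel" by measurable
  note pp = past_gen[OF F \<phi>, of t]
  show ?thesis using pp(1) eta_mom(3) finite_var by simp
qed

definition "EA = \<alpha>1 * sqrt (2 / pi) * k + \<beta>1 * (k + k\<^sup>2) + \<gamma>1 * k"

lemma h2_etaX: "integrable M (\<lambda>\<omega>. (eta t \<omega> * X t \<omega>) * (h t \<omega>)\<^sup>2)"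
  "expectation (\<lambda>\<omega>. (eta t \<omega> * X t \<omega>) * (h t \<omega>)\<^sup>2) = EA * Qh"
proof -
  have F: "(\<lambda>p. (\<lambda>a b. b * xf a b) (fst p) (snd p)) \<in> borel_measurable (borel \<Otimes>\<^sub>M borel)" unfolding xf_def by measurable
  have \<phi>: "(\<lambda>x::real. x\<^sup>2) \<in> borel_measurable borel" by measurable
  note pp = past_gen[OF F \<phi>, of t, folded X_xf]
  show "integrable M (\<lambda>\<omega>. (eta t \<omega> * X t \<omega>) * (h t \<omega>)\<^sup>2)" using pp(1) eta_X(1) finite_var by simp
  show "expectation (\<lambda>\<omega>. (eta t \<omega> * X t \<omega>) * (h t \<omega>)\<^sup>2) = EA * Qh"
    using pp(2) eta_X(1,2) finite_var Eh2 by (simp add: EA_def)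
qed

lemma Z_int: "integrable M (\<lambda>\<omega>. h t \<omega> * h (t + int s) \<omega> * eta t \<omega>)"
proof -
  define g where "g \<omega> = ((eta t \<omega>)\<^sup>2 * (h t \<omega>)\<^sup>2 + (h (t + int s) \<omega>)\<^sup>2) / 2" for \<omega>
  have ig: "integrable M g" unfolding g_def using h2_eta2[of t] finite_var[of "t + int s"] by auto
  have "\<bar>h t \<omega> * h (t + int s) \<omega> * eta t \<omega>\<bar> \<le> g \<omega>" for \<omega>
    using amgm[of 1 "\<bar>eta t \<omega> * h t \<omega>\<bar>" "\<bar>h (t + int s) \<omega>\<bar>"]
    by (simp add: g_def abs_mult power_mult_distrib algebra_simps)
  then show ?thesis
    by (intro Bochner_Integration.integrable_bound[OF ig]) (auto intro!: AE_I2 order_trans[OF _ abs_ge_self])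
qed

lemma a_one: "expectation (\<lambda>\<omega>. h t \<omega> * h (t + 1) \<omega> * eta t \<omega>) = \<mu> * (k * mh) + EA * Qh"
proof -
  have ae: "AE \<omega> in M. h t \<omega> * h (t + 1) \<omega> * eta t \<omega> = \<mu> * (eta t \<omega> * h t \<omega>) + (eta t \<omega> * X t \<omega>) * (h t \<omega>)\<^sup>2"
    using rec2u[of "t + 1"] by eventually_elim (simp add: power2_eq_square algebra_simps)
  have "expectation (\<lambda>\<omega>. h t \<omega> * h (t + 1) \<omega> * eta t \<omega>) = expectation (\<lambda>\<omega>. \<mu> * (eta t \<omega> * h t \<omega>) + (eta t \<omega> * X t \<omega>) * (h t \<omega>)\<^sup>2)"
    by (rule integral_cong_AE[OF _ _ ae]) measurable
  also have "\<dots> = \<mu> * (k * mh) + EA * Qh"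
    using h_eta[of t] h2_etaX[of t]
    by (simp add: Bochner_Integration.integral_add Bochner_Integration.integral_mult_right del: integral_mult_right_zero)
  finally show ?thesis .
qed

lemma ZX: assumes s: "1 \<le> s"
  shows "integrable M (\<lambda>\<omega>. (h t \<omega> * h (t + int s) \<omega> * eta t \<omega>) * X (t + int s) \<omega>)"
    and "expectation (\<lambda>\<omega>. (h t \<omega> * h (t + int s) \<omega> * eta t \<omega>) * X (t + int s) \<omega>)
     = C1 * expectation (\<lambda>\<omega>. h t \<omega> * h (t + int s) \<omega> * eta t \<omega>)"
proof -
  define A where "A = {i. tm i < t + int s}"
  define B where "B = {Inl (t + int s), Inr (t + int s)}"
  have AB: "A \<inter> B = {}" by (auto simp: A_def B_def tm_def)
  have a1: "\<And>i. 1 \<le> i \<Longrightarrow> Inl (t - int i) \<in> A \<and> Inr (t - int i) \<in> A" using s by (auto simp: A_def tm_def)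
  have a2: "\<And>i. 1 \<le> i \<Longrightarrow> Inl (t + int s - int i) \<in> A \<and> Inr (t + int s - int i) \<in> A" by (auto simp: A_def tm_def)
  have it: "Inr t \<in> A" using s by (auto simp: A_def tm_def)
  define Fz where "Fz f = Gf t f * Gf (t + int s) f * f (Inr t)" for f
  have F: "Fz \<in> borel_measurable (PiM A (\<lambda>_. borel))"
    using Gf_meas[OF a1] Gf_meas[OF a2] it unfolding Fz_def[abs_def] by measurable
  have G: "(\<lambda>f. xv f (t + int s)) \<in> borel_measurable (PiM B (\<lambda>_. borel))"
    by (rule xv_meas) (auto simp: B_def)
  have eG: "\<And>\<omega>. xv (restrict (\<lambda>i. nz eps eta i \<omega>) B) (t + int s) = X (t + int s) \<omega>"
    by (simp add: B_def xv_restrict X_xv)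
  have aeZ: "AE \<omega> in M. h t \<omega> * h (t + int s) \<omega> * eta t \<omega> = Fz (restrict (\<lambda>i. nz eps eta i \<omega>) A)"
  proof -
    have hA: "AE \<omega> in M. h t \<omega> = Gf t (restrict (\<lambda>i. nz eps eta i \<omega>) A)" by (rule h_Gf) (use a1 in auto)
    have hB: "AE \<omega> in M. h (t + int s) \<omega> = Gf (t + int s) (restrict (\<lambda>i. nz eps eta i \<omega>) A)" by (rule h_Gf) (use a2 in auto)
    show ?thesis using hA hB by eventually_elim (use it in \<open>simp add: Fz_def nz_def\<close>)
  qed
  have mF: "(\<lambda>\<omega>. Fz (restrict (\<lambda>i. nz eps eta i \<omega>) A)) \<in> borel_measurable M"
  proof -
    have "(\<lambda>\<omega>. restrict (\<lambda>i. nz eps eta i \<omega>) A) \<in> measurable M (PiM A (\<lambda>_. borel))" by measurable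
    then show ?thesis using F by (rule measurable_compose)
  qed
  have iZ: "integrable M (\<lambda>\<omega>. Fz (restrict (\<lambda>i. nz eps eta i \<omega>) A))"
    by (rule integrable_cong_AE_imp[OF Z_int[of t s] mF aeZ])
  have iG: "integrable M (\<lambda>\<omega>. xv (restrict (\<lambda>i. nz eps eta i \<omega>) B) (t + int s))"
    unfolding eG using X_mom(1) by simp
  note bp = block_prod[OF AB F G iZ iG, unfolded eG]
  show "integrable M (\<lambda>\<omega>. (h t \<omega> * h (t + int s) \<omega> * eta t \<omega>) * X (t + int s) \<omega>)"
    by (rule integrable_cong_AE_imp[OF bp(1)]) (use aeZ in \<open>measurable, eventually_elim, metis\<close>)
  have "expectation (\<lambda>\<omega>. (h t \<omega> * h (t + int s) \<omega> * eta t \<omega>) * X (t + int s) \<omega>)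
      = expectation (\<lambda>\<omega>. Fz (restrict (\<lambda>i. nz eps eta i \<omega>) A) * X (t + int s) \<omega>)"
    by (rule integral_cong_AE) (use aeZ mF in \<open>auto elim: AE_mp\<close>)
  also have "\<dots> = expectation (\<lambda>\<omega>. Fz (restrict (\<lambda>i. nz eps eta i \<omega>) A)) * expectation (X (t + int s))"
    by (rule bp(2))
  also have "expectation (X (t + int s)) = C1" by (rule X_mom(2))
  also have "expectation (\<lambda>\<omega>. Fz (restrict (\<lambda>i. nz eps eta i \<omega>) A)) = expectation (\<lambda>\<omega>. h t \<omega> * h (t + int s) \<omega> * eta t \<omega>)"
    by (rule integral_cong_AE) (use aeZ mF in \<open>auto elim: AE_mp\<close>)
  finally show "expectation (\<lambda>\<omega>. (h t \<omega> * h (t + int s) \<omega> * eta t \<omega>) * X (t + int s) \<omega>)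
     = C1 * expectation (\<lambda>\<omega>. h t \<omega> * h (t + int s) \<omega> * eta t \<omega>)" by simp
qed


lemma a_step: assumes s: "1 \<le> s"
  shows "expectation (\<lambda>\<omega>. h t \<omega> * h (t + int (Suc s)) \<omega> * eta t \<omega>)
     = \<mu> * (k * mh) + C1 * expectation (\<lambda>\<omega>. h t \<omega> * h (t + int s) \<omega> * eta t \<omega>)"
proof -
  have ae: "AE \<omega> in M. h t \<omega> * h (t + int (Suc s)) \<omega> * eta t \<omega> = \<mu> * (eta t \<omega> * h t \<omega>) + (h t \<omega> * h (t + int s) \<omega> * eta t \<omega>) * X (t + int s) \<omega>"
    using rec2u[of "t + int (Suc s)"] by eventually_elim (simp add: algebra_simps)
  have "expectation (\<lambda>\<omega>. h t \<omega> * h (t + int (Suc s)) \<omega> * eta t \<omega>) = expectation (\<lambda>\<omega>. \<mu> * (eta t \<omega> * h t \<omega>) + (h t \<omega> * h (t + int s) \<omega> * eta t \<omega>) * X (t + int s) \<omega>)"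
    by (rule integral_cong_AE[OF _ _ ae]) measurable
  also have "\<dots> = \<mu> * (k * mh) + C1 * expectation (\<lambda>\<omega>. h t \<omega> * h (t + int s) \<omega> * eta t \<omega>)"
    using h_eta[of t] ZX[OF s, of t]
    by (simp add: Bochner_Integration.integral_add Bochner_Integration.integral_mult_right del: integral_mult_right_zero)
  finally show ?thesis .
qed

definition "Tf s = \<mu>\<^sup>2 * k / (C1 - 1) *
              (- (C1 ^ s - 1) / (C1 - 1)
               + (C1 ^ s + C1 ^ (s - 1)) / (C2 - 1)
                 * (\<alpha>1 * sqrt (2 / pi) + \<beta>1 * (1 + k) + \<gamma>1))"

lemma dnz: "C1 - 1 \<noteq> 0" "1 - C1 \<noteq> 0" "C2 - 1 \<noteq> 0" "1 - C2 \<noteq> 0"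
  using C21 C1l by auto

lemma mh_alt: "mh = - \<mu> / (C1 - 1)"
  unfolding mh_def using dnz by (simp add: field_simps)

lemma Qh_alt: "Qh = \<mu>\<^sup>2 * (1 + C1) / ((C1 - 1) * (C2 - 1))"
proof -
  have "\<mu>\<^sup>2 + 2 * \<mu> * C1 * mh = \<mu>\<^sup>2 * (1 + C1) / (1 - C1)"
    unfolding mh_def using dnz by (simp add: field_simps power2_eq_square)
  then have "Qh = \<mu>\<^sup>2 * (1 + C1) / (1 - C1) / (1 - C2)" by (simp add: Qh_def)
  also have "\<dots> = \<mu>\<^sup>2 * (1 + C1) / ((C1 - 1) * (C2 - 1))"
    using dnz by (simp add: field_simps)
  finally show ?thesis .
qed

lemma EA_alt: "EA = k * (\<alpha>1 * sqrt (2 / pi) + \<beta>1 * (1 + k) + \<gamma>1)"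
  unfolding EA_def by (simp add: power2_eq_square algebra_simps)

lemma T_one: "Tf 1 = \<mu> * (k * mh) + EA * Qh"
  unfolding Tf_def EA_alt Qh_alt mh_alt
  using t1[of C1 C2 \<mu> k "\<alpha>1 * sqrt (2 / pi) + \<beta>1 * (1 + k) + \<gamma>1"] C21 C1l by (simp add: algebra_simps)

lemma T_step: "Tf (Suc (Suc n)) = \<mu> * (k * mh) + C1 * Tf (Suc n)"
  unfolding Tf_def mh_alt
  using t2[of C1 C2 \<mu> k n "\<alpha>1 * sqrt (2 / pi) + \<beta>1 * (1 + k) + \<gamma>1"] C21 C1l by simp

lemma part2: "1 \<le> s \<Longrightarrow> expectation (\<lambda>\<omega>. h t \<omega> * h (t + int s) \<omega> * eta t \<omega>) = Tf s"
proof (induction s rule: nat_induct_at_least)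
  case base
  then show ?case using a_one[of t] T_one by simp
next
  case (Suc n)
  obtain m where n: "n = Suc m" using Suc.hyps by (cases n) auto
  show ?case using a_step[OF Suc.hyps, of t] Suc.IH T_step[of m] n by simp
qed

end

theorem lemma1:
  fixes M :: "'a measure"
    and h eps eta :: "int \<Rightarrow> 'a \<Rightarrow> real"
    and \<mu> \<alpha>1 \<beta>1 \<gamma>1 k C1 C2 :: real
  assumes "prob_space M"
    and "\<mu> > 0" "\<alpha>1 > 0" "\<beta>1 > 0" "\<gamma>1 > 0" "k > 0"
    and meas_h: "\<And>t. h t \<in> borel_measurable M"
    and rec: "\<And>t \<omega>. \<omega> \<in> space M \<Longrightarrow>
        h t \<omega> = \<mu> + \<alpha>1 * \<bar>h (t - 1) \<omega> * eps (t - 1) \<omega>\<bar>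
                 + \<beta>1 * (h (t - 1) \<omega> * eta (t - 1) \<omega>) + \<gamma>1 * h (t - 1) \<omega>"
    and eps_distr: "\<And>t. distributed M lborel (eps t) std_normal_density"
    and eta_distr: "\<And>t. distributed M lborel (eta t) (gamma_density k)"
    and indep_noise: "prob_space.indep_vars M (\<lambda>_. borel)
        (\<lambda>i. case i of Inl t \<Rightarrow> eps t | Inr t \<Rightarrow> eta t) UNIV"
    and indep_past: "\<And>t. prob_space.indep_set M
        (sets (vimage_algebra (space M) (\<lambda>\<omega>. (eps t \<omega>, eta t \<omega>)) (borel \<Otimes>\<^sub>M borel)))
        (sets (vimage_algebra (space M) (\<lambda>\<omega>. \<lambda>s\<in>{..t}. h s \<omega>) (PiM {..t} (\<lambda>_. borel))))"
    and finite_var: "\<And>t. integrable M (\<lambda>\<omega>. (h t \<omega>)\<^sup>2)"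
    and bounded_var: "\<exists>B. \<forall>t. prob_space.expectation M (\<lambda>\<omega>. (h t \<omega>)\<^sup>2) \<le> B"
    and C1_def: "\<And>t. prob_space.expectation M
        (\<lambda>\<omega>. \<alpha>1 * \<bar>eps t \<omega>\<bar> + \<beta>1 * eta t \<omega> + \<gamma>1) = C1"
    and C2_def: "\<And>t. prob_space.expectation M
        (\<lambda>\<omega>. (\<alpha>1 * \<bar>eps t \<omega>\<bar> + \<beta>1 * eta t \<omega> + \<gamma>1)\<^sup>2) = C2"
    and "C2 < C1" "C1 < 1"
  shows "(\<forall>t. prob_space.expectation M
            (\<lambda>\<omega>. eta t \<omega> * (\<alpha>1 * \<bar>eps t \<omega>\<bar> + \<beta>1 * eta t \<omega> + \<gamma>1))
          = \<alpha>1 * sqrt (2 / pi) * k + \<beta>1 * (k + k\<^sup>2) + \<gamma>1 * k)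
       \<and> (\<forall>t. \<forall>s::nat. s \<ge> 1 \<longrightarrow>
          prob_space.expectation M (\<lambda>\<omega>. h t \<omega> * h (t + int s) \<omega> * eta t \<omega>)
          = \<mu>\<^sup>2 * k / (C1 - 1) *
              (- (C1 ^ s - 1) / (C1 - 1)
               + (C1 ^ s + C1 ^ (s - 1)) / (C2 - 1)
                 * (\<alpha>1 * sqrt (2 / pi) + \<beta>1 * (1 + k) + \<gamma>1)))"
proof -
  interpret I: igarch M h eps eta \<mu> \<alpha>1 \<beta>1 \<gamma>1 k C1 C2
    apply (intro igarch.intro igarch_axioms.intro)
                     apply (fact assms)+
    done
  show ?thesis
  proof
    show "\<forall>t. prob_space.expectation M
            (\<lambda>\<omega>. eta t \<omega> * (\<alpha>1 * \<bar>eps t \<omega>\<bar> + \<beta>1 * eta t \<omega> + \<gamma>1))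
          = \<alpha>1 * sqrt (2 / pi) * k + \<beta>1 * (k + k\<^sup>2) + \<gamma>1 * k"
      using I.eta_X(2) unfolding I.X_def by blast
    show "\<forall>t. \<forall>s::nat. s \<ge> 1 \<longrightarrow>
          prob_space.expectation M (\<lambda>\<omega>. h t \<omega> * h (t + int s) \<omega> * eta t \<omega>)
          = \<mu>\<^sup>2 * k / (C1 - 1) *
              (- (C1 ^ s - 1) / (C1 - 1)
               + (C1 ^ s + C1 ^ (s - 1)) / (C2 - 1)
                 * (\<alpha>1 * sqrt (2 / pi) + \<beta>1 * (1 + k) + \<gamma>1))"
      using I.part2 unfolding I.Tf_def by blast
  qed
qed

end
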